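(* Let $\Delta$ be a finite set with $|\Delta|\ge2$, $\ell\ge2$, $\Omega=\Delta^\ell$, $W=\mathrm{Sym}\,\Delta\wr S_\ell$ in product action on $\Omega$, $G\le W$, and let $M$ be a minimal normal subgroup of $G$ transitive on $\Omega$, $M=T_1\times\cdots\times T_k$ with the $T_i$ isomorphic finite simple groups. Let $\Gamma$ be a connected graph with vertex set $\Omega$ with $G\le\mathrm{Aut}\,\Gamma$. Suppose $M$ is not regular on $\Omega$ and the inclusion $G\le W$ is normal. Then $\Gamma$ is not $(G,2)$-arc-transitive.
   Context: Product action: $(\delta_1,\dots,\delta_\ell)^{(g_1,\dots,g_\ell)h}=(\delta_{1h^{-1}}g_{1h^{-1}},\dots,\delta_{\ell h^{-1}}g_{\ell h^{-1}})$. Let $\pi:W\to S_\ell$ be the natural projection, $W_j$ the stabiliser of $j$ under $\pi$, $W_j=\mathrm{Sym}\,\Delta\times(\mathrm{Sym}\,\Delta\wr S_{\ell-1})$ with the first factor on the $j$-th coordinate; the component $M^{(j)}$ is the projection of $M\cap W_j$ onto the first factor, identified (for non-abelian $M$) with the product of those $T_i$ not in the kernel of $M\to M^{(j)}$. The inclusion $G\le W$ is normal if $M$ is non-abelian and each $T_i$ lies in exactly one $M^{(j)}$ (equivalently $M=\prod_jM^{(j)}$). $\Gamma$ is $(G,2)$-arc-transitive if $G$ is transitive on sequences $(v_0,v_1,v_2)$ of vertices with $v_0\sim v_1\sim v_2$ and $v_0\ne v_2$. *)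

theory Defs
  imports "HOL-Algebra.Algebra" "HOL-Combinatorics.Permutations"
begin

text \<open>The set \<Omega> = \<Delta>^\<ell>, points are extensional functions on {..<\<ell>} (coordinates 0..\<ell>-1).\<close>
definition Omega :: "'a set \<Rightarrow> nat \<Rightarrow> (nat \<Rightarrow> 'a) set" where
  "Omega D l = (\<Pi>\<^sub>E i\<in>{..<l}. D)"

definition Sub :: "'b set \<Rightarrow> ('b \<Rightarrow> 'b) set \<Rightarrow> ('b \<Rightarrow> 'b) monoid" where
  "Sub S Y = BijGroup S \<lparr>carrier := Y\<rparr>"

text \<open>The permutation of \<Omega> given by the wreath element (g_1,...,g_l)h in product action:
  the i-th coordinate of the image is g_{i h^-1} applied to the (i h^-1)-th coordinate.\<close>
definition wr_elem :: "'a set \<Rightarrow> nat \<Rightarrow> (nat \<Rightarrow> 'a \<Rightarrow> 'a) \<Rightarrow> (nat \<Rightarrow> nat)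
    \<Rightarrow> (nat \<Rightarrow> 'a) \<Rightarrow> (nat \<Rightarrow> 'a)" where
  "wr_elem D l g h = (\<lambda>w\<in>Omega D l. \<lambda>i\<in>{..<l}. g (inv_into UNIV h i) (w (inv_into UNIV h i)))"

definition wr_data :: "'a set \<Rightarrow> nat \<Rightarrow> (nat \<Rightarrow> 'a \<Rightarrow> 'a) \<Rightarrow> (nat \<Rightarrow> nat) \<Rightarrow> bool" where
  "wr_data D l g h \<longleftrightarrow> (\<forall>i<l. bij_betw (g i) D D) \<and> h permutes {..<l}"

definition Wr :: "'a set \<Rightarrow> nat \<Rightarrow> ((nat \<Rightarrow> 'a) \<Rightarrow> (nat \<Rightarrow> 'a)) set" where
  "Wr D l = {wr_elem D l g h | g h. wr_data D l g h}"

definition Wr_stab :: "'a set \<Rightarrow> nat \<Rightarrow> nat \<Rightarrow> ((nat \<Rightarrow> 'a) \<Rightarrow> (nat \<Rightarrow> 'a)) set" where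
  "Wr_stab D l j = {wr_elem D l g h | g h. wr_data D l g h \<and> h j = j}"

definition component :: "'a set \<Rightarrow> nat \<Rightarrow> ((nat \<Rightarrow> 'a) \<Rightarrow> (nat \<Rightarrow> 'a)) set \<Rightarrow> nat
    \<Rightarrow> ('a \<Rightarrow> 'a) set" where
  "component D l M j = {restrict (g j) D | g h. wr_data D l g h \<and> h j = j \<and> wr_elem D l g h \<in> M}"

definition prod_components :: "'a set \<Rightarrow> nat \<Rightarrow> ((nat \<Rightarrow> 'a) \<Rightarrow> (nat \<Rightarrow> 'a)) set
    \<Rightarrow> ((nat \<Rightarrow> 'a) \<Rightarrow> (nat \<Rightarrow> 'a)) set" where
  "prod_components D l M = {wr_elem D l g id | g. \<forall>j<l. restrict (g j) D \<in> component D l M j}"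

definition nonabelian :: "('b \<Rightarrow> 'b) set \<Rightarrow> 'b set \<Rightarrow> bool" where
  "nonabelian M S \<longleftrightarrow> (\<exists>x\<in>M. \<exists>y\<in>M. compose S x y \<noteq> compose S y x)"

definition normal_inclusion :: "'a set \<Rightarrow> nat \<Rightarrow> ((nat \<Rightarrow> 'a) \<Rightarrow> (nat \<Rightarrow> 'a)) set \<Rightarrow> bool" where
  "normal_inclusion D l M \<longleftrightarrow> nonabelian M (Omega D l) \<and> M = prod_components D l M"

definition minimal_normal :: "('b \<Rightarrow> 'b) set \<Rightarrow> ('b \<Rightarrow> 'b) set \<Rightarrow> 'b set \<Rightarrow> bool" where
  "minimal_normal M G S \<longleftrightarrow> M \<lhd> Sub S G \<and> M \<noteq> {\<one>\<^bsub>BijGroup S\<^esub>} \<and>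
     (\<forall>N. N \<lhd> Sub S G \<and> N \<subseteq> M \<longrightarrow> N = {\<one>\<^bsub>BijGroup S\<^esub>} \<or> N = M)"

definition internal_direct_product :: "'b set \<Rightarrow> ('b \<Rightarrow> 'b) set \<Rightarrow> nat \<Rightarrow> (nat \<Rightarrow> ('b \<Rightarrow> 'b) set) \<Rightarrow> bool" where
  "internal_direct_product S M k T \<longleftrightarrow>
     (\<exists>\<phi>. \<phi> \<in> iso (product_group {..<k} (\<lambda>i. Sub S (T i))) (Sub S M) \<and>
        (\<forall>i<k. \<forall>t\<in>(\<Pi>\<^sub>E j\<in>{..<k}. T j). (\<forall>j<k. j \<noteq> i \<longrightarrow> t j = \<one>\<^bsub>BijGroup S\<^esub>) \<longrightarrow> \<phi> t = t i))"

definition transitive_on :: "('b \<Rightarrow> 'b) set \<Rightarrow> 'b set \<Rightarrow> bool" where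
  "transitive_on M S \<longleftrightarrow> (\<forall>x\<in>S. \<forall>y\<in>S. \<exists>m\<in>M. m x = y)"

definition regular_on :: "('b \<Rightarrow> 'b) set \<Rightarrow> 'b set \<Rightarrow> bool" where
  "regular_on M S \<longleftrightarrow> transitive_on M S \<and>
     (\<forall>m\<in>M. \<forall>x\<in>S. m x = x \<longrightarrow> m = \<one>\<^bsub>BijGroup S\<^esub>)"

definition simple_graph :: "'b set \<Rightarrow> ('b \<Rightarrow> 'b \<Rightarrow> bool) \<Rightarrow> bool" where
  "simple_graph V E \<longleftrightarrow> (\<forall>x y. E x y \<longrightarrow> x \<in> V \<and> y \<in> V) \<and> (\<forall>x y. E x y \<longrightarrow> E y x) \<and> (\<forall>x. \<not> E x x)"

definition connected_graph :: "'b set \<Rightarrow> ('b \<Rightarrow> 'b \<Rightarrow> bool) \<Rightarrow> bool" where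
  "connected_graph V E \<longleftrightarrow> (\<forall>x\<in>V. \<forall>y\<in>V. (\<lambda>a b. E a b)\<^sup>*\<^sup>* x y)"

definition automorphisms_of :: "('b \<Rightarrow> 'b) set \<Rightarrow> 'b set \<Rightarrow> ('b \<Rightarrow> 'b \<Rightarrow> bool) \<Rightarrow> bool" where
  "automorphisms_of G V E \<longleftrightarrow> (\<forall>g\<in>G. \<forall>x\<in>V. \<forall>y\<in>V. E (g x) (g y) \<longleftrightarrow> E x y)"

definition two_arcs :: "'b set \<Rightarrow> ('b \<Rightarrow> 'b \<Rightarrow> bool) \<Rightarrow> ('b \<times> 'b \<times> 'b) set" where
  "two_arcs V E = {(v0, v1, v2). v0 \<in> V \<and> v1 \<in> V \<and> v2 \<in> V \<and> E v0 v1 \<and> E v1 v2 \<and> v0 \<noteq> v2}"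

definition two_arc_transitive :: "('b \<Rightarrow> 'b) set \<Rightarrow> 'b set \<Rightarrow> ('b \<Rightarrow> 'b \<Rightarrow> bool) \<Rightarrow> bool" where
  "two_arc_transitive G V E \<longleftrightarrow>
     (\<forall>a\<in>two_arcs V E. \<forall>b\<in>two_arcs V E. \<exists>g\<in>G.
        (case a of (a0, a1, a2) \<Rightarrow> (g a0, g a1, g a2)) = b)"

end

theory Submission
  imports Defs
begin


locale setting =
  fixes D :: "'a set" and l :: nat
    and G M :: "((nat \<Rightarrow> 'a) \<Rightarrow> (nat \<Rightarrow> 'a)) set"
    and E :: "(nat \<Rightarrow> 'a) \<Rightarrow> (nat \<Rightarrow> 'a) \<Rightarrow> bool"
  assumes finD: "finite D" and cardD: "card D \<ge> 2" and l2: "l \<ge> 2"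
    and Gsub: "subgroup G (BijGroup (Omega D l))" and GW: "G \<subseteq> Wr D l"
    and Mmin: "minimal_normal M G (Omega D l)"
    and Mtrans: "transitive_on M (Omega D l)"
    and sg: "simple_graph (Omega D l) E" and conn: "connected_graph (Omega D l) E"
    and aut: "automorphisms_of G (Omega D l) E"
    and nreg: "\<not> regular_on M (Omega D l)"
    and Mprod: "M = prod_components D l M"
    and tat: "two_arc_transitive G (Omega D l) E"
begin

abbreviation "S \<equiv> Omega D l"
definition iv :: "((nat \<Rightarrow> 'a) \<Rightarrow> (nat \<Rightarrow> 'a)) \<Rightarrow> ((nat \<Rightarrow> 'a) \<Rightarrow> (nat \<Rightarrow> 'a))"
  where "iv f = (\<lambda>x\<in>S. inv_into S f x)"

abbreviation "GG \<equiv> Sub S G"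

lemma grpB: "group (BijGroup S)" by (rule group_BijGroup)

lemma grpGG: "group GG"
  unfolding Sub_def using group.subgroup_imp_group[OF grpB Gsub] .

lemma Mnormal: "M \<lhd> GG" using Mmin unfolding minimal_normal_def by blast

lemma Msub: "subgroup M GG" using Mnormal normal_imp_subgroup by blast

lemma G_Bij: "G \<subseteq> Bij S"
  using subgroup.subset[OF Gsub] by (simp add: BijGroup_def)

lemma carrGG: "carrier GG = G" by (simp add: Sub_def)
lemma multGG: "x \<in> G \<Longrightarrow> y \<in> G \<Longrightarrow> x \<otimes>\<^bsub>GG\<^esub> y = compose S x y"
proof -
  assume "x \<in> G" "y \<in> G"
  hence "x \<in> Bij S" "y \<in> Bij S" using G_Bij by auto
  moreover have "x \<otimes>\<^bsub>GG\<^esub> y = x \<otimes>\<^bsub>BijGroup S\<^esub> y" by (simp add: Sub_def)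
  ultimately show ?thesis by (simp add: BijGroup_def)
qed
lemma oneGG: "\<one>\<^bsub>GG\<^esub> = (\<lambda>x\<in>S. x)" by (simp add: Sub_def BijGroup_def)
lemma invGG: "x \<in> G \<Longrightarrow> inv\<^bsub>GG\<^esub> x = iv x"
proof -
  assume x: "x \<in> G"
  have "inv\<^bsub>GG\<^esub> x = inv\<^bsub>BijGroup S\<^esub> x"
    unfolding Sub_def using group.m_inv_consistent[OF grpB Gsub x] .
  also have "\<dots> = iv x" using inv_BijGroup[of x S] x G_Bij unfolding iv_def by auto
  finally show ?thesis .
qed

lemma M_G: "M \<subseteq> G" using subgroup.subset[OF Msub] carrGG by simp

lemma Bij_mem: "f \<in> Bij S \<Longrightarrow> u \<in> S \<Longrightarrow> f u \<in> S"
  by (auto simp: Bij_def bij_betw_def)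
lemma Bij_inj: "f \<in> Bij S \<Longrightarrow> u \<in> S \<Longrightarrow> v \<in> S \<Longrightarrow> f u = f v \<Longrightarrow> u = v"
  by (auto simp: Bij_def bij_betw_def inj_on_def)
lemma iv_mem: "f \<in> Bij S \<Longrightarrow> u \<in> S \<Longrightarrow> iv f u \<in> S"
  by (simp add: iv_def Bij_inv_into_mem)
lemma iv_r: "f \<in> Bij S \<Longrightarrow> u \<in> S \<Longrightarrow> f (iv f u) = u"
  by (auto simp: iv_def Bij_def bij_betw_def f_inv_into_f)
lemma iv_l: "f \<in> Bij S \<Longrightarrow> u \<in> S \<Longrightarrow> iv f (f u) = u"
  by (auto simp: iv_def Bij_def bij_betw_def inv_into_f_f Bij_mem)
lemma ext_eq: "f \<in> Bij S \<Longrightarrow> g \<in> Bij S \<Longrightarrow> (\<And>u. u \<in> S \<Longrightarrow> f u = g u) \<Longrightarrow> f = g"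
  by (auto simp: Bij_def intro: extensionalityI)

lemma M_Bij: "m \<in> M \<Longrightarrow> m \<in> Bij S" using M_G G_Bij by blast

lemma M_one: "(\<lambda>x\<in>S. x) \<in> M" using subgroup.one_closed[OF Msub] oneGG by simp
lemma M_comp: "x \<in> M \<Longrightarrow> y \<in> M \<Longrightarrow> compose S x y \<in> M"
  using subgroup.m_closed[OF Msub] multGG M_G by (metis subsetD)
lemma M_iv: "x \<in> M \<Longrightarrow> iv x \<in> M"
  using subgroup.m_inv_closed[OF Msub] invGG M_G by (metis subsetD)
lemma M_conj: "g \<in> G \<Longrightarrow> n \<in> M \<Longrightarrow> compose S (compose S g n) (iv g) \<in> M"
proof -
  assume g: "g \<in> G" and n: "n \<in> M"
  have "g \<otimes>\<^bsub>GG\<^esub> n \<otimes>\<^bsub>GG\<^esub> inv\<^bsub>GG\<^esub> g \<in> M"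
    using normal.inv_op_closed2[OF Mnormal] g n carrGG by simp
  moreover have "iv g \<in> G" using g invGG group.inv_closed[OF grpGG] carrGG by metis
  moreover have "n \<in> G" using n M_G by auto
  moreover have "compose S g n \<in> G" using g \<open>n \<in> G\<close> multGG subgroup.m_closed[OF Gsub]
    by (metis Sub_def carrGG group.subgroup_self grpGG subgroup.m_closed)
  ultimately show ?thesis using g multGG invGG by metis
qed

lemma G_comp: "x \<in> G \<Longrightarrow> y \<in> G \<Longrightarrow> compose S x y \<in> G"
  by (metis carrGG group.subgroup_self grpGG multGG subgroup.m_closed)
lemma G_iv: "x \<in> G \<Longrightarrow> iv x \<in> G"
  using invGG group.inv_closed[OF grpGG] carrGG by metis
lemma G_BijI: "g \<in> G \<Longrightarrow> g \<in> Bij S" using G_Bij by blast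

lemma S_eq: "a \<in> S \<Longrightarrow> b \<in> S \<Longrightarrow> (\<And>q. q < l \<Longrightarrow> a q = b q) \<Longrightarrow> a = b"
  unfolding Omega_def by (auto simp: PiE_def intro: extensionalityI)
lemma S_coord: "a \<in> S \<Longrightarrow> q < l \<Longrightarrow> a q \<in> D"
  unfolding Omega_def by auto
lemma S_restrict: "a \<in> S \<Longrightarrow> (\<lambda>i\<in>{..<l}. a i) = a"
  unfolding Omega_def by (simp add: PiE_def extensional_restrict)
lemma S_mk: "(\<And>q. q < l \<Longrightarrow> f q \<in> D) \<Longrightarrow> (\<lambda>q\<in>{..<l}. f q) \<in> S"
  unfolding Omega_def by auto

lemma comp_ev: "u \<in> S \<Longrightarrow> compose S f g u = f (g u)" by (simp add: compose_eq)

lemma M_rep: "m \<in> M \<Longrightarrow> \<exists>g. (\<forall>u\<in>S. m u = (\<lambda>i\<in>{..<l}. g i (u i))) \<and>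
     (\<forall>j<l. restrict (g j) D \<in> component D l M j) \<and> m = wr_elem D l g id"
proof -
  assume "m \<in> M"
  then have "m \<in> prod_components D l M" using Mprod by simp
  then obtain g where g: "m = wr_elem D l g id" "\<forall>j<l. restrict (g j) D \<in> component D l M j"
    unfolding prod_components_def by blast
  show ?thesis
    by (rule exI[of _ g]) (simp add: g wr_elem_def)
qed

lemma M_cw: "m \<in> M \<Longrightarrow> u \<in> S \<Longrightarrow> v \<in> S \<Longrightarrow> u q = v q \<Longrightarrow> m u q = m v q"
  using M_rep by fastforce

lemma M_mem: "m \<in> M \<Longrightarrow> u \<in> S \<Longrightarrow> m u \<in> S" using M_Bij Bij_mem by blast

lemma id_wr: "wr_elem D l (\<lambda>_. id) id = (\<lambda>x\<in>S. x)"
  unfolding wr_elem_def by (auto simp: S_restrict)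

lemma comp_id: "i < l \<Longrightarrow> restrict id D \<in> component D l M i"
  unfolding component_def
proof (intro CollectI exI conjI)
  show "wr_data D l (\<lambda>_. id) id" by (simp add: wr_data_def permutes_id)
  show "wr_elem D l (\<lambda>_. id) id \<in> M" using id_wr M_one by simp
qed auto

definition part :: "nat \<Rightarrow> ((nat \<Rightarrow> 'a) \<Rightarrow> (nat \<Rightarrow> 'a)) \<Rightarrow> ((nat \<Rightarrow> 'a) \<Rightarrow> (nat \<Rightarrow> 'a))"
  where "part j m = (\<lambda>u\<in>S. \<lambda>i\<in>{..<l}. if i = j then m u i else u i)"

lemma part_M: "m \<in> M \<Longrightarrow> j < l \<Longrightarrow> part j m \<in> M"
proof -
  assume m: "m \<in> M" and j: "j < l"
  obtain g where g: "\<forall>u\<in>S. m u = (\<lambda>i\<in>{..<l}. g i (u i))"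
     "\<forall>j<l. restrict (g j) D \<in> component D l M j" using M_rep[OF m] by blast
  define g' where "g' = (\<lambda>i. if i = j then g j else id)"
  have "part j m = wr_elem D l g' id"
    unfolding part_def wr_elem_def g'_def using g(1) by (auto intro!: ext)
  moreover have "wr_elem D l g' id \<in> prod_components D l M"
    unfolding prod_components_def using g(2) comp_id by (auto simp: g'_def)
  ultimately show ?thesis using Mprod by simp
qed

lemma part_ev: "u \<in> S \<Longrightarrow> q < l \<Longrightarrow> part j m u q = (if q = j then m u q else u q)"
  by (simp add: part_def)

lemma parts_fix: "m \<in> M \<Longrightarrow> u \<in> S \<Longrightarrow> (\<And>i. i < l \<Longrightarrow> part i m u = u) \<Longrightarrow> m u = u"
proof -
  assume m: "m \<in> M" and u: "u \<in> S" and h: "\<And>i. i < l \<Longrightarrow> part i m u = u"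
  show "m u = u"
  proof (rule S_eq[OF M_mem[OF m u] u])
    fix q assume q: "q < l"
    have "part q m u q = u q" using h[OF q] by simp
    thus "m u q = u q" using part_ev[OF u q] by simp
  qed
qed

lemma part_fix: "m \<in> M \<Longrightarrow> u \<in> S \<Longrightarrow> m u = u \<Longrightarrow> part i m u = u"
proof -
  assume "m \<in> M" "u \<in> S" "m u = u"
  hence "part i m u = (\<lambda>q\<in>{..<l}. u q)" unfolding part_def by (auto intro!: restrict_ext)
  thus ?thesis using S_restrict \<open>u \<in> S\<close> by simp
qed

end

context setting begin

lemma G_rep: "g \<in> G \<Longrightarrow> \<exists>g' h. wr_data D l g' h \<and> g = wr_elem D l g' h"
  using GW unfolding Wr_def by blast

lemma wr_ev: "u \<in> S \<Longrightarrow> q < l \<Longrightarrow> wr_elem D l g' h u q = g' (inv_into UNIV h q) (u (inv_into UNIV h q))"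
  by (simp add: wr_elem_def)

lemma aut': "g \<in> G \<Longrightarrow> v \<in> S \<Longrightarrow> w \<in> S \<Longrightarrow> E (g v) (g w) = E v w"
  using aut unfolding automorphisms_of_def by blast

lemma E_S: "E v w \<Longrightarrow> v \<in> S \<and> w \<in> S" using sg unfolding simple_graph_def by blast
lemma E_sym: "E v w \<Longrightarrow> E w v" using sg unfolding simple_graph_def by blast
lemma E_irr: "\<not> E v v" using sg unfolding simple_graph_def by blast

definition d1 :: "(nat \<Rightarrow> 'a) \<Rightarrow> (nat \<Rightarrow> 'a) \<Rightarrow> bool" where
  "d1 a b \<longleftrightarrow> (\<exists>i<l. a i \<noteq> b i \<and> (\<forall>p<l. p \<noteq> i \<longrightarrow> a p = b p))"

lemma ham: "g \<in> G \<Longrightarrow> a \<in> S \<Longrightarrow> b \<in> S \<Longrightarrow> d1 a b \<Longrightarrow> d1 (g a) (g b)"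
proof -
  assume g: "g \<in> G" and a: "a \<in> S" and b: "b \<in> S" and d: "d1 a b"
  obtain g' h where gh: "wr_data D l g' h" "g = wr_elem D l g' h" using G_rep[OF g] by blast
  have hp: "h permutes {..<l}" and gb: "\<forall>i<l. bij_betw (g' i) D D" using gh(1) unfolding wr_data_def by auto
  obtain i where i: "i < l" "a i \<noteq> b i" "\<forall>p<l. p \<noteq> i \<longrightarrow> a p = b p" using d unfolding d1_def by blast
  have hi: "h i < l" using permutes_in_image[OF hp, of i] i(1) by simp
  have ihi: "inv_into UNIV h (h i) = i" using permutes_inverses(2)[OF hp] by simp
  have "g a (h i) \<noteq> g b (h i)"
  proof -
    have "g' i (a i) \<noteq> g' i (b i)" using gb i S_coord[OF a i(1)] S_coord[OF b i(1)]
      unfolding bij_betw_def inj_on_def by blast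
    thus ?thesis using gh(2) wr_ev[OF a hi] wr_ev[OF b hi] ihi by simp
  qed
  moreover have "\<forall>p<l. p \<noteq> h i \<longrightarrow> g a p = g b p"
  proof (intro allI impI)
    fix p assume p: "p < l" "p \<noteq> h i"
    have q: "inv_into UNIV h p < l" using p(1) permutes_in_image[OF permutes_inv[OF hp], of p] by simp
    have "inv_into UNIV h p \<noteq> i" using p(2) permutes_inverses(1)[OF hp] by metis
    hence "a (inv_into UNIV h p) = b (inv_into UNIV h p)" using i(3) q by blast
    thus "g a p = g b p" using gh(2) wr_ev[OF a p(1)] wr_ev[OF b p(1)] by simp
  qed
  ultimately show ?thesis unfolding d1_def using hi by blast
qed

lemma two_t: "E v a \<Longrightarrow> E v b \<Longrightarrow> a \<noteq> b \<Longrightarrow> E v c \<Longrightarrow> E v d \<Longrightarrow> c \<noteq> d \<Longrightarrow>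
   \<exists>g\<in>G. g a = c \<and> g v = v \<and> g b = d"
proof -
  assume h: "E v a" "E v b" "a \<noteq> b" "E v c" "E v d" "c \<noteq> d"
  have "(a, v, b) \<in> two_arcs S E" "(c, v, d) \<in> two_arcs S E"
    unfolding two_arcs_def using h E_S E_sym by auto
  then obtain g where "g \<in> G" "(g a, g v, g b) = (c, v, d)"
    using tat unfolding two_arc_transitive_def by fastforce
  thus ?thesis by auto
qed

lemma conj_ev: "g \<in> Bij S \<Longrightarrow> u \<in> S \<Longrightarrow> compose S (compose S g n) (iv g) u = g (n (iv g u))"
  by (simp add: comp_ev iv_mem)

lemma transT: "v \<in> S \<Longrightarrow> n \<in> M \<Longrightarrow> n v = v \<Longrightarrow> E v a \<Longrightarrow> n a \<noteq> a \<Longrightarrow> E v c \<Longrightarrow> E v d \<Longrightarrow>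
   \<exists>m\<in>M. m v = v \<and> m c = d"
proof -
  assume v: "v \<in> S" and n: "n \<in> M" "n v = v" and a: "E v a" "n a \<noteq> a" and cd: "E v c" "E v d"
  show ?thesis
  proof (cases "c = d")
    case True thus ?thesis using M_one v E_S cd by (intro bexI[of _ "\<lambda>x\<in>S. x"]) auto
  next
    case False
    have na: "E v (n a)" using aut'[of n v a] n M_G E_S[OF a(1)] a by auto
    obtain g where g: "g \<in> G" "g a = c" "g v = v" "g (n a) = d"
      using two_t[OF a(1) na _ cd False] a(2) by metis
    have gB: "g \<in> Bij S" using g G_Bij by blast
    have aS: "a \<in> S" using E_S a by blast
    let ?m = "compose S (compose S g n) (iv g)"
    have "?m \<in> M" using M_conj g n by blast
    moreover have "?m v = v" using conj_ev[OF gB v] iv_l[OF gB v] g(3) n(2) by simp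
    moreover have "?m c = d" using conj_ev[OF gB, of c] iv_l[OF gB aS] g E_S cd by simp
    ultimately show ?thesis by blast
  qed
qed

end

context setting begin

definition onlyon :: "nat \<Rightarrow> ((nat \<Rightarrow> 'a) \<Rightarrow> (nat \<Rightarrow> 'a)) \<Rightarrow> bool" where
  "onlyon i n \<longleftrightarrow> (\<forall>u\<in>S. \<forall>p<l. p \<noteq> i \<longrightarrow> n u p = u p)"

definition K :: "nat \<Rightarrow> (nat \<Rightarrow> 'a) \<Rightarrow> ((nat \<Rightarrow> 'a) \<Rightarrow> (nat \<Rightarrow> 'a)) set" where
  "K i v = {n \<in> M. onlyon i n \<and> n v = v}"

definition LP :: "(nat \<Rightarrow> 'a) \<Rightarrow> nat \<Rightarrow> bool" where
  "LP v j \<longleftrightarrow> (\<forall>a b. E v a \<longrightarrow> E v b \<longrightarrow> (\<forall>i<l. i \<noteq> j \<longrightarrow> a i = b i))"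

lemma onlyon_part: "onlyon i (part i m)"
  unfolding onlyon_def by (simp add: part_ev)

lemma part_K: "m \<in> M \<Longrightarrow> i < l \<Longrightarrow> v \<in> S \<Longrightarrow> m v = v \<Longrightarrow> part i m \<in> K i v"
  unfolding K_def using part_M onlyon_part part_fix by blast

lemma finS: "finite S"
  unfolding Omega_def using finD by (simp add: finite_PiE)

lemma finBij: "finite (Bij S)"
proof -
  have "Bij S \<subseteq> S \<rightarrow>\<^sub>E S" by (auto simp: Bij_def bij_betw_def PiE_def)
  thus ?thesis using finite_PiE[of S "\<lambda>_. S"] finS finite_subset by blast
qed

lemma finK: "finite (K i v)"
  using finBij M_Bij finite_subset unfolding K_def by (metis (no_types, lifting) mem_Collect_eq subsetI)

lemma K_conj: "m \<in> M \<Longrightarrow> v \<in> S \<Longrightarrow> n \<in> K i v \<Longrightarrow>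
   compose S (compose S m n) (iv m) \<in> K i (m v)"
proof -
  assume m: "m \<in> M" and v: "v \<in> S" and n: "n \<in> K i v"
  have mB: "m \<in> Bij S" using M_Bij m by blast
  have nM: "n \<in> M" and no: "onlyon i n" and nv: "n v = v" using n unfolding K_def by auto
  have "compose S (compose S m n) (iv m) \<in> M" using M_conj m nM M_G by blast
  moreover have "onlyon i (compose S (compose S m n) (iv m))"
    unfolding onlyon_def
  proof (intro ballI allI impI)
    fix u p assume u: "u \<in> S" and p: "p < l" "p \<noteq> i"
    let ?z = "iv m u"
    have z: "?z \<in> S" using iv_mem[OF mB u] .
    have "n ?z p = ?z p" using no z p unfolding onlyon_def by blast
    hence "m (n ?z) p = m ?z p" using M_cw[OF m M_mem[OF nM z] z] by simp
    thus "compose S (compose S m n) (iv m) u p = u p" using conj_ev[OF mB u] iv_r[OF mB u] by simp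
  qed
  moreover have "compose S (compose S m n) (iv m) (m v) = m v"
    using conj_ev[OF mB Bij_mem[OF mB v]] iv_l[OF mB v] nv by simp
  ultimately show ?thesis unfolding K_def by blast
qed

lemma K_card_le: "v \<in> S \<Longrightarrow> w \<in> S \<Longrightarrow> card (K i v) \<le> card (K i w)"
proof -
  assume v: "v \<in> S" and w: "w \<in> S"
  obtain m where m: "m \<in> M" "m v = w" using Mtrans v w unfolding transitive_on_def by blast
  have mB: "m \<in> Bij S" using M_Bij m by blast
  let ?f = "\<lambda>n. compose S (compose S m n) (iv m)"
  have "?f ` K i v \<subseteq> K i w" using K_conj m v by blast
  moreover have "inj_on ?f (K i v)"
  proof (rule inj_onI)
    fix n1 n2 assume n: "n1 \<in> K i v" "n2 \<in> K i v" and eq: "?f n1 = ?f n2"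
    have nB: "n1 \<in> Bij S" "n2 \<in> Bij S" using n M_Bij unfolding K_def by auto
    show "n1 = n2"
    proof (rule ext_eq[OF nB])
      fix z assume z: "z \<in> S"
      have "?f n1 (m z) = ?f n2 (m z)" using eq by simp
      hence "m (n1 z) = m (n2 z)" using conj_ev[OF mB Bij_mem[OF mB z]] iv_l[OF mB z] by simp
      thus "n1 z = n2 z" using Bij_inj[OF mB Bij_mem[OF nB(1) z] Bij_mem[OF nB(2) z]] by simp
    qed
  qed
  ultimately show ?thesis using card_inj_on_le finK by blast
qed

lemma K_eq: "v \<in> S \<Longrightarrow> w \<in> S \<Longrightarrow> K i v \<subseteq> K i w \<Longrightarrow> K i v = K i w"
  using card_subset_eq[OF finK] K_card_le by (metis antisym)

lemma K_fix: "v \<in> S \<Longrightarrow> n \<in> K i v \<Longrightarrow> u \<in> S \<Longrightarrow> u i = v i \<Longrightarrow> i < l \<Longrightarrow> n u = u"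
proof -
  assume v: "v \<in> S" and n: "n \<in> K i v" and u: "u \<in> S" and ui: "u i = v i" and i: "i < l"
  have nM: "n \<in> M" and no: "onlyon i n" and nv: "n v = v" using n unfolding K_def by auto
  show ?thesis
  proof (rule S_eq[OF M_mem[OF nM u] u])
    fix q assume q: "q < l"
    show "n u q = u q"
    proof (cases "q = i")
      case True
      have "n u i = n v i" using M_cw[OF nM u v ui] .
      thus ?thesis using True nv ui by simp
    next
      case False thus ?thesis using no u q unfolding onlyon_def by blast
    qed
  qed
qed

end

context setting begin

lemma propagate: "x \<in> S \<Longrightarrow> P x \<Longrightarrow> (\<And>u w. u \<in> S \<Longrightarrow> P u \<Longrightarrow> E u w \<Longrightarrow> P w) \<Longrightarrow> y \<in> S \<Longrightarrow> P y"
proof -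
  assume x: "x \<in> S" and Px: "P x" and st: "\<And>u w. u \<in> S \<Longrightarrow> P u \<Longrightarrow> E u w \<Longrightarrow> P w" and y: "y \<in> S"
  have "E\<^sup>*\<^sup>* x y" using conn x y unfolding connected_graph_def by blast
  thus "P y"
  proof (induction rule: rtranclp_induct)
    case base thus ?case using Px .
  next
    case (step y z) thus ?case using st E_S by blast
  qed
qed

lemma one_eq: "n \<in> M \<Longrightarrow> (\<And>u. u \<in> S \<Longrightarrow> n u = u) \<Longrightarrow> n = (\<lambda>x\<in>S. x)"
proof -
  assume n: "n \<in> M" and h: "\<And>u. u \<in> S \<Longrightarrow> n u = u"
  show ?thesis by (rule ext_eq[OF M_Bij[OF n] id_Bij]) (simp add: h)
qed

lemma Snonempty: "\<exists>x. x \<in> S"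
proof -
  have "D \<noteq> {}" using cardD by (cases "D = {}") auto
  then obtain d where "d \<in> D" by blast
  thus ?thesis using S_mk[of "\<lambda>_. d"] by blast
qed

lemma nontriv: "v \<in> S \<Longrightarrow> \<exists>n\<in>M. n v = v \<and> (\<exists>a. E v a \<and> n a \<noteq> a)"
proof (rule ccontr)
  assume v: "v \<in> S" and h: "\<not> (\<exists>n\<in>M. n v = v \<and> (\<exists>a. E v a \<and> n a \<noteq> a))"
  have all: "\<forall>u\<in>S. \<forall>n\<in>M. n u = u \<longrightarrow> (\<forall>a. E u a \<longrightarrow> n a = a)"
  proof (intro ballI allI impI, rule ccontr)
    fix u n a assume u: "u \<in> S" and n: "n \<in> M" "n u = u" and a: "E u a" "n a \<noteq> a"
    obtain m where m: "m \<in> M" "m u = v" using Mtrans u v unfolding transitive_on_def by blast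
    have mB: "m \<in> Bij S" using M_Bij m by blast
    have aS: "a \<in> S" using E_S a by blast
    let ?c = "compose S (compose S m n) (iv m)"
    have "?c \<in> M" using M_conj m n M_G by blast
    moreover have "?c v = v" using conj_ev[OF mB v] m(2) iv_l[OF mB u] n by simp
    moreover have "m \<in> G" using m M_G by blast
    hence "E v (m a)" using aut'[of m u a] m(2) u aS a(1) by simp
    moreover have "?c (m a) = m (n a)"
      using conj_ev[OF mB Bij_mem[OF mB aS]] iv_l[OF mB aS] by simp
    moreover have "m (n a) \<noteq> m a"
      using a(2) Bij_inj[OF mB M_mem[OF n(1) aS] aS] by blast
    ultimately have "?c \<in> M \<and> ?c v = v \<and> E v (m a) \<and> ?c (m a) \<noteq> m a" by simp
    thus False using h by blast
  qed
  have one: "\<one>\<^bsub>BijGroup S\<^esub> = (\<lambda>x\<in>S. x)" by (simp add: BijGroup_def)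
  have "\<not> (\<forall>m\<in>M. \<forall>x\<in>S. m x = x \<longrightarrow> m = \<one>\<^bsub>BijGroup S\<^esub>)"
    using nreg Mtrans unfolding regular_on_def by blast
  then obtain n x where nx0: "n \<in> M" "x \<in> S" "n x = x" "n \<noteq> \<one>\<^bsub>BijGroup S\<^esub>" by blast
  have nx: "n \<in> M" "x \<in> S" "n x = x" "n \<noteq> (\<lambda>x\<in>S. x)" using nx0 one by simp_all
  have "\<And>y. y \<in> S \<Longrightarrow> n y = y"
  proof -
    fix y assume y: "y \<in> S"
    show "n y = y"
    proof (rule propagate[of x "\<lambda>y. n y = y", OF nx(2) nx(3) _ y])
      fix u w assume "u \<in> S" "n u = u" "E u w"
      thus "n w = w" using all nx(1) by blast
    qed
  qed
  thus False using one_eq nx by blast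
qed

lemma line: "v \<in> S \<Longrightarrow> \<exists>j<l. LP v j"
proof -
  assume v: "v \<in> S"
  obtain n a where n: "n \<in> M" "n v = v" "E v a" "n a \<noteq> a" using nontriv[OF v] by blast
  have aS: "a \<in> S" using E_S n by blast
  obtain j where j: "j < l" "n a j \<noteq> a j" using S_eq[OF M_mem[OF n(1) aS] aS] n(4) by blast
  let ?b = "part j n a"
  have pM: "part j n \<in> M" using part_M n j by blast
  have pv: "part j n v = v" using part_fix n v by blast
  have Eb: "E v ?b" using aut'[of "part j n" v a] pM M_G v aS pv n by auto
  have bj: "?b j \<noteq> a j" using part_ev[OF aS j(1)] j by simp
  have bo: "\<forall>p<l. p \<noteq> j \<longrightarrow> ?b p = a p" using part_ev[OF aS] by simp
  have ab: "a \<noteq> ?b" using bj by auto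
  have dall: "\<And>c d. E v c \<Longrightarrow> E v d \<Longrightarrow> c \<noteq> d \<Longrightarrow> d1 c d"
  proof -
    fix c d assume cd: "E v c" "E v d" "c \<noteq> d"
    obtain g where g: "g \<in> G" "g a = c" "g v = v" "g ?b = d" using two_t[OF n(3) Eb ab cd] by blast
    have "d1 a ?b" unfolding d1_def
      by (rule exI[of _ j]) (use j(1) bj bo in auto)
    hence "d1 (g a) (g ?b)" using ham[OF g(1) aS] E_S[OF Eb] by blast
    thus "d1 c d" by (simp add: g)
  qed
  have key: "\<And>c i. E v c \<Longrightarrow> i < l \<Longrightarrow> i \<noteq> j \<Longrightarrow> c i = a i"
  proof -
    fix c i assume c: "E v c" and i: "i < l" "i \<noteq> j"
    show "c i = a i"
    proof (cases "c = a \<or> c = ?b")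
      case True thus ?thesis using bo i by auto
    next
      case False
      hence "d1 c a" "d1 c ?b" using dall[OF c n(3)] dall[OF c Eb] by auto
      then obtain p q where p: "p < l" "c p \<noteq> a p" "\<forall>r<l. r \<noteq> p \<longrightarrow> c r = a r"
        and q: "q < l" "c q \<noteq> ?b q" "\<forall>r<l. r \<noteq> q \<longrightarrow> c r = ?b r" unfolding d1_def by blast
      show ?thesis
      proof (rule ccontr)
        assume ne: "c i \<noteq> a i"
        hence "p = i" using p i by blast
        hence "c j = a j" using p(3) i(2) j(1) by auto
        hence "c j \<noteq> ?b j" using bj by simp
        hence "q = j" using q j by blast
        moreover have "c i \<noteq> ?b i" using ne bo i by simp
        hence "q = i" using q i by blast
        ultimately show False using i by simp
      qed
    qed
  qed
  have "LP v j" unfolding LP_def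
  proof (intro allI impI)
    fix c d i assume "E v c" "E v d" "i < l" "i \<noteq> j"
    thus "c i = d i" using key[of c i] key[of d i] by simp
  qed
  thus ?thesis using j by blast
qed

lemma K_prop: "LP v j \<Longrightarrow> E v w \<Longrightarrow> i < l \<Longrightarrow> i \<noteq> j \<Longrightarrow> K i v \<subseteq> K i w"
proof
  fix n assume L: "LP v j" and e: "E v w" and i: "i < l" "i \<noteq> j" and n: "n \<in> K i v"
  have nM: "n \<in> M" and nv: "n v = v" using n unfolding K_def by auto
  have vS: "v \<in> S" and wS: "w \<in> S" using E_S e by auto
  have "n \<in> G" using nM M_G by blast
  hence "E v (n w)" using aut'[of n v w] vS wS nv e by simp
  hence "n w i = w i" using L e i unfolding LP_def by simp
  hence ni: "n w i = w i" .
  have no: "onlyon i n" using n unfolding K_def by auto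
  have "n w = w"
  proof (rule S_eq[OF M_mem[OF nM wS] wS])
    fix q assume q: "q < l"
    show "n w q = w q"
    proof (cases "q = i")
      case True thus ?thesis using ni by simp
    next
      case False thus ?thesis using no wS q unfolding onlyon_def by blast
    qed
  qed
  thus "n \<in> K i w" using n unfolding K_def by auto
qed

end

context setting begin

lemma cardS: "card S \<ge> 3"
proof -
  have "card S = card D ^ l" unfolding Omega_def by (simp add: card_PiE)
  moreover have "card D ^ l \<ge> 2 ^ 2"
    using power_mono[OF cardD, of l] power_increasing[OF l2, of "2::nat"] by linarith
  ultimately show ?thesis by simp
qed

lemma degree: "E v w \<Longrightarrow> (\<forall>c. E v c \<longrightarrow> c = w) \<Longrightarrow> (\<forall>c. E w c \<longrightarrow> c = v) \<Longrightarrow> False"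
proof -
  assume e: "E v w" and hv: "\<forall>c. E v c \<longrightarrow> c = w" and hw: "\<forall>c. E w c \<longrightarrow> c = v"
  have vS: "v \<in> S" using E_S e by blast
  have "\<not> S \<subseteq> {v, w}"
  proof
    assume "S \<subseteq> {v, w}"
    hence "card S \<le> card {v, w}" by (simp add: card_mono)
    also have "\<dots> \<le> 2" by (simp add: card_insert_le_m1)
    finally show False using cardS by simp
  qed
  then obtain z where z: "z \<in> S" "z \<notin> {v, w}" by blast
  have "z \<in> {v, w}"
  proof (rule propagate[of v "\<lambda>y. y \<in> {v, w}", OF vS _ _ z(1)])
    show "v \<in> {v, w}" by simp
    fix u y assume "u \<in> S" "u \<in> {v, w}" "E u y"
    thus "y \<in> {v, w}" using hv hw by blast
  qed
  thus False using z by blast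
qed

definition J :: "(nat \<Rightarrow> 'a) \<Rightarrow> nat" where "J v = (SOME j. j < l \<and> LP v j)"

lemma J: "v \<in> S \<Longrightarrow> J v < l \<and> LP v (J v)"
  unfolding J_def using someI_ex[OF line] by blast

lemma fixw: "v \<in> S \<Longrightarrow> w \<in> S \<Longrightarrow> (\<forall>i<l. K i v = K i w) \<Longrightarrow> E v c \<Longrightarrow> E v w \<Longrightarrow> c = w"
proof -
  assume vS: "v \<in> S" and wS: "w \<in> S" and Kall: "\<forall>i<l. K i v = K i w" and c: "E v c" and e: "E v w"
  obtain n a where n: "n \<in> M" "n v = v" "E v a" "n a \<noteq> a" using nontriv[OF vS] by blast
  obtain m where m: "m \<in> M" "m v = v" "m w = c" using transT[OF vS n(1,2,3,4) e c] by blast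
  have "m w = w"
  proof (rule parts_fix[OF m(1) wS])
    fix i assume i: "i < l"
    have "part i m \<in> K i w" using part_K[OF m(1) i vS m(2)] Kall i by simp
    thus "part i m w = w" using K_fix[OF wS _ wS refl i] by blast
  qed
  thus "c = w" using m by simp
qed

lemma edge_J: "E v w \<Longrightarrow> J v = J w"
proof (rule ccontr)
  assume e: "E v w" and ne: "J v \<noteq> J w"
  have vS: "v \<in> S" and wS: "w \<in> S" using E_S e by auto
  have Jv: "J v < l" "LP v (J v)" and Jw: "J w < l" "LP w (J w)" using J vS wS by auto
  have Kall: "\<forall>i<l. K i v = K i w"
  proof (intro allI impI)
    fix i assume i: "i < l"
    show "K i v = K i w"
    proof (cases "i = J v")
      case False show ?thesis using K_eq[OF vS wS K_prop[OF Jv(2) e i False]] .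
    next
      case True
      hence "i \<noteq> J w" using ne by simp
      thus ?thesis using K_eq[OF wS vS K_prop[OF Jw(2) E_sym[OF e] i]] by simp
    qed
  qed
  have "\<forall>c. E v c \<longrightarrow> c = w" using fixw[OF vS wS Kall _ e] by blast
  moreover have "\<forall>c. E w c \<longrightarrow> c = v" using fixw[OF wS vS _ _ E_sym[OF e]] Kall by metis
  ultimately show False using degree e by blast
qed

end

context setting begin

lemma J_const: "x \<in> S \<Longrightarrow> y \<in> S \<Longrightarrow> J y = J x"
  by (rule propagate[of x "\<lambda>y. J y = J x"]) (auto dest: edge_J)

lemma Ktriv: "u \<in> S \<Longrightarrow> i < l \<Longrightarrow> i \<noteq> J u \<Longrightarrow> n \<in> K i u \<Longrightarrow> n = (\<lambda>x\<in>S. x)"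
proof -
  assume u: "u \<in> S" and i: "i < l" "i \<noteq> J u" and n: "n \<in> K i u"
  have all: "\<And>y. y \<in> S \<Longrightarrow> n \<in> K i y"
  proof -
    fix y assume y: "y \<in> S"
    show "n \<in> K i y"
    proof (rule propagate[of u "\<lambda>y. n \<in> K i y", OF u n _ y])
      fix a b assume a: "a \<in> S" "n \<in> K i a" "E a b"
      have "i \<noteq> J a" using J_const[OF u a(1)] i by simp
      thus "n \<in> K i b" using K_prop[OF conjunct2[OF J[OF a(1)]] a(3) i(1)] a(2) by blast
    qed
  qed
  have "n \<in> M" using n unfolding K_def by auto
  thus ?thesis using one_eq all unfolding K_def by blast
qed

lemma conjG: "wr_data D l g' h \<Longrightarrow> g = wr_elem D l g' h \<Longrightarrow> g \<in> G \<Longrightarrow> n \<in> M \<Longrightarrow> i < l \<Longrightarrow>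
   onlyon i n \<Longrightarrow> onlyon (h i) (compose S (compose S g n) (iv g))"
  unfolding onlyon_def
proof (intro ballI allI impI)
  fix u p assume wd: "wr_data D l g' h" and g: "g = wr_elem D l g' h" "g \<in> G" and n: "n \<in> M"
    and i: "i < l" and no: "\<forall>u\<in>S. \<forall>p<l. p \<noteq> i \<longrightarrow> n u p = u p" and u: "u \<in> S" and p: "p < l" "p \<noteq> h i"
  have hp: "h permutes {..<l}" using wd unfolding wr_data_def by auto
  have gB: "g \<in> Bij S" using g G_Bij by blast
  let ?z = "iv g u"
  let ?q = "inv_into UNIV h p"
  have z: "?z \<in> S" using iv_mem[OF gB u] .
  have q: "?q < l" using p(1) permutes_in_image[OF permutes_inv[OF hp], of p] by simp
  have qi: "?q \<noteq> i" using p(2) permutes_inverses(1)[OF hp] by metis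
  have nz: "n ?z ?q = ?z ?q" using no z q qi by blast
  have "compose S (compose S g n) (iv g) u p = g (n ?z) p" using conj_ev[OF gB u] by simp
  also have "\<dots> = g' ?q (n ?z ?q)" using g(1) wr_ev[OF M_mem[OF n z] p(1)] by simp
  also have "\<dots> = g ?z p" using g(1) wr_ev[OF z p(1)] nz by simp
  also have "\<dots> = u p" using iv_r[OF gB u] by simp
  finally show "compose S (compose S g n) (iv g) u p = u p" .
qed

lemma final: False
proof -
  have one: "\<one>\<^bsub>BijGroup S\<^esub> = (\<lambda>x\<in>S. x)" by (simp add: BijGroup_def)
  have "\<not> (\<forall>m\<in>M. \<forall>x\<in>S. m x = x \<longrightarrow> m = \<one>\<^bsub>BijGroup S\<^esub>)"
    using nreg Mtrans unfolding regular_on_def by blast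
  then obtain n x where nx0: "n \<in> M" "x \<in> S" "n x = x" "n \<noteq> \<one>\<^bsub>BijGroup S\<^esub>" by blast
  have nx: "n \<noteq> (\<lambda>x\<in>S. x)" using nx0 one by simp
  obtain y where y: "y \<in> S" "n y \<noteq> y" using one_eq[OF nx0(1)] nx by blast
  obtain q where q: "q < l" "part q n y \<noteq> y" using parts_fix[OF nx0(1) y(1)] y(2) by blast
  define j0 where "j0 = J x"
  define k where "k = part q n"
  have kK: "k \<in> K q x" unfolding k_def using part_K[OF nx0(1) q(1) nx0(2,3)] .
  have ky: "k y \<noteq> y" using q(2) k_def by simp
  have qj: "q = j0"
  proof (rule ccontr)
    assume "q \<noteq> j0"
    hence "k = (\<lambda>x\<in>S. x)" using Ktriv[OF nx0(2) q(1) _ kK] j0_def by simp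
    thus False using ky y(1) by simp
  qed
  have kM: "k \<in> M" and ko: "onlyon j0 k" and kx: "k x = x" using kK qj unfolding K_def by auto
  have j0l: "j0 < l" using q qj by simp
  have hfix: "\<And>g g' h. g \<in> G \<Longrightarrow> wr_data D l g' h \<Longrightarrow> g = wr_elem D l g' h \<Longrightarrow> h j0 = j0"
  proof (rule ccontr)
    fix g g' h assume g: "g \<in> G" and wd: "wr_data D l g' h" and ge: "g = wr_elem D l g' h"
      and ne: "h j0 \<noteq> j0"
    have hp: "h permutes {..<l}" using wd unfolding wr_data_def by auto
    have hl: "h j0 < l" using permutes_in_image[OF hp, of j0] j0l by simp
    have gB: "g \<in> Bij S" using g G_Bij by blast
    let ?c = "compose S (compose S g k) (iv g)"
    have gx: "g x \<in> S" using Bij_mem[OF gB nx0(2)] .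
    have "?c \<in> M" using M_conj[OF g kM] .
    moreover have "onlyon (h j0) ?c" using conjG[OF wd ge g kM j0l ko] .
    moreover have "?c (g x) = g x" using conj_ev[OF gB gx] iv_l[OF gB nx0(2)] kx by simp
    ultimately have "?c \<in> K (h j0) (g x)" unfolding K_def by blast
    moreover have "h j0 \<noteq> J (g x)" using J_const[OF nx0(2) gx] ne j0_def by simp
    ultimately have "?c = (\<lambda>x\<in>S. x)" using Ktriv[OF gx hl] by blast
    hence "?c (g y) = g y" using Bij_mem[OF gB y(1)] by simp
    hence "g (k y) = g y" using conj_ev[OF gB Bij_mem[OF gB y(1)]] iv_l[OF gB y(1)] by simp
    hence "k y = y" using Bij_inj[OF gB M_mem[OF kM y(1)] y(1)] by blast
    thus False using ky by simp
  qed
  define N where "N = {m \<in> M. onlyon j0 m}"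
  have NM: "N \<subseteq> M" unfolding N_def by blast
  have Nsub: "subgroup N GG"
  proof (rule group.subgroupI[OF grpGG])
    show "N \<subseteq> carrier GG" using NM M_G carrGG by blast
    show "N \<noteq> {}" using kM ko N_def by blast
  next
    fix a assume a: "a \<in> N"
    have aM: "a \<in> M" and ao: "onlyon j0 a" using a N_def by auto
    have aB: "a \<in> Bij S" using M_Bij aM by blast
    have "onlyon j0 (iv a)" unfolding onlyon_def
    proof (intro ballI allI impI)
      fix u p assume u: "u \<in> S" and p: "p < l" "p \<noteq> j0"
      have "a (iv a u) p = iv a u p" using ao iv_mem[OF aB u] p unfolding onlyon_def by blast
      thus "iv a u p = u p" using iv_r[OF aB u] by simp
    qed
    thus "inv\<^bsub>GG\<^esub> a \<in> N" using invGG M_iv aM M_G N_def by auto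
  next
    fix a b assume a: "a \<in> N" and b: "b \<in> N"
    have aM: "a \<in> M" and ao: "onlyon j0 a" using a N_def by auto
    have bM: "b \<in> M" and bo: "onlyon j0 b" using b N_def by auto
    have "onlyon j0 (compose S a b)" unfolding onlyon_def
    proof (intro ballI allI impI)
      fix u p assume u: "u \<in> S" and p: "p < l" "p \<noteq> j0"
      have 1: "a (b u) p = b u p" using ao M_mem[OF bM u] p unfolding onlyon_def by blast
      have 2: "b u p = u p" using bo u p unfolding onlyon_def by blast
      have 3: "compose S a b u = a (b u)" by (rule comp_ev[OF u])
      show "compose S a b u p = u p" unfolding 3 using 1 2 by simp
    qed
    moreover have "a \<otimes>\<^bsub>GG\<^esub> b = compose S a b" using multGG aM bM M_G by blast
    ultimately show "a \<otimes>\<^bsub>GG\<^esub> b \<in> N" using M_comp[OF aM bM] N_def by simp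
  qed
  have Nnorm: "N \<lhd> GG"
    unfolding group.normal_inv_iff[OF grpGG]
  proof (intro conjI Nsub ballI)
    fix g a assume g: "g \<in> carrier GG" and a: "a \<in> N"
    have gG: "g \<in> G" using g carrGG by simp
    have aM: "a \<in> M" and ao: "onlyon j0 a" using a N_def by auto
    obtain g' h where gh: "wr_data D l g' h" "g = wr_elem D l g' h" using G_rep[OF gG] by blast
    have "onlyon (h j0) (compose S (compose S g a) (iv g))" using conjG[OF gh gG aM j0l ao] .
    hence "onlyon j0 (compose S (compose S g a) (iv g))" using hfix[OF gG gh] by simp
    moreover have "compose S (compose S g a) (iv g) \<in> M" using M_conj[OF gG aM] .
    moreover have "g \<otimes>\<^bsub>GG\<^esub> a \<otimes>\<^bsub>GG\<^esub> inv\<^bsub>GG\<^esub> g = compose S (compose S g a) (iv g)"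
      using multGG invGG gG aM M_G G_comp G_iv by auto
    ultimately show "g \<otimes>\<^bsub>GG\<^esub> a \<otimes>\<^bsub>GG\<^esub> inv\<^bsub>GG\<^esub> g \<in> N" unfolding N_def by simp
  qed
  have "N = {\<one>\<^bsub>BijGroup S\<^esub>} \<or> N = M" using Mmin Nnorm NM unfolding minimal_normal_def by blast
  moreover have "N \<noteq> {\<one>\<^bsub>BijGroup S\<^esub>}"
  proof
    assume "N = {\<one>\<^bsub>BijGroup S\<^esub>}"
    moreover have "k \<in> N" using kM ko N_def by blast
    ultimately have "k = (\<lambda>x\<in>S. x)" using one by simp
    thus False using ky y(1) by simp
  qed
  moreover have "N \<noteq> M"
  proof
    assume NM: "N = M"
    define i where "i = (if j0 = 0 then 1 else 0::nat)"
    have i: "i < l" "i \<noteq> j0" using l2 unfolding i_def by auto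
    obtain d1 d2 where d: "d1 \<in> D" "d2 \<in> D" "d1 \<noteq> d2"
    proof -
      have "\<not> D \<subseteq> {}" using cardD by (cases "D = {}") auto
      then obtain d1 where d1: "d1 \<in> D" by blast
      have "\<not> D \<subseteq> {d1}" using cardD card_mono[of "{d1}" D] by (metis One_nat_def card.empty card.insert
           empty_iff finite.intros(1) not_numeral_le_zero numeral_le_one_iff semiring_norm(69) subset_singletonD)
      then obtain d2 where "d2 \<in> D" "d2 \<noteq> d1" by blast
      thus ?thesis using that d1 by blast
    qed
    define u where "u = (\<lambda>q\<in>{..<l}. d1)"
    define u' where "u' = (\<lambda>q\<in>{..<l}. if q = i then d2 else d1)"
    have uS: "u \<in> S" unfolding u_def using S_mk[of "\<lambda>_. d1"] d by auto
    have u'S: "u' \<in> S" unfolding u'_def using S_mk[of "\<lambda>q. if q = i then d2 else d1"] d by auto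
    obtain m where m: "m \<in> M" "m u = u'" using Mtrans uS u'S unfolding transitive_on_def by blast
    have "onlyon j0 m" using m NM N_def by blast
    hence "m u i = u i" using uS i unfolding onlyon_def by blast
    thus False using m i d unfolding u_def u'_def by simp
  qed
  ultimately show False by blast
qed

end

theorem corollary3p5:
  fixes D :: "'a set" and l k :: nat
    and G M :: "((nat \<Rightarrow> 'a) \<Rightarrow> (nat \<Rightarrow> 'a)) set"
    and T :: "nat \<Rightarrow> ((nat \<Rightarrow> 'a) \<Rightarrow> (nat \<Rightarrow> 'a)) set"
    and E :: "(nat \<Rightarrow> 'a) \<Rightarrow> (nat \<Rightarrow> 'a) \<Rightarrow> bool"
  assumes "finite D" and "card D \<ge> 2" and "l \<ge> 2"
    and "subgroup G (BijGroup (Omega D l))" and "G \<subseteq> Wr D l"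
    and "minimal_normal M G (Omega D l)"
    and "transitive_on M (Omega D l)"
    and "k \<ge> 1"
    and "\<forall>i<k. simple_group (Sub (Omega D l) (T i))"
    and "\<forall>i<k. \<forall>j<k. Sub (Omega D l) (T i) \<cong> Sub (Omega D l) (T j)"
    and "internal_direct_product (Omega D l) M k T"
    and "simple_graph (Omega D l) E" and "connected_graph (Omega D l) E"
    and "automorphisms_of G (Omega D l) E"
    and "\<not> regular_on M (Omega D l)"
    and "normal_inclusion D l M"
  shows "\<not> two_arc_transitive G (Omega D l) E"
proof
  assume tat: "two_arc_transitive G (Omega D l) E"
  interpret setting D l G M E
    by (rule setting.intro) (use assms tat in \<open>simp_all add: normal_inclusion_def\<close>)
  show False by (rule final)
qed

end
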